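(* Let $G=(V_G,E_G)$ be a graph with $N$ vertices, $g\ge0$, and $H$ the transverse-field Ising Hamiltonian on $G$. Then $$\min_{|\varphi\rangle\text{ stabilizer state}}\langle\varphi|H|\varphi\rangle=\min_{n\in\{0,1,\dots,N\}}\big(-\mathcal{E}(n)-g(N-n)\big).$$ Moreover, any vertex set $V$ minimizing $f(S)=-|E(S)|-g|V_G\setminus S|$ over $S\subseteq V_G$ is an $n$-optimal vertex set for $n=|V|$.
   Context: A graph $G=(V_G,E_G)$ is finite, simple and undirected, with $V_G=\{q_0,\dots,q_{N-1}\}$, vertex $q_i$ corresponding to qubit $i$. For $S\subseteq V_G$, $E(S)$ is the set of edges with both endpoints in $S$. The transverse-field Ising Hamiltonian on $G$ is $H=-\sum_{\langle q_i,q_j\rangle\in E_G}Z_iZ_j-g\sum_{q_i\in V_G}X_i$; stabilizer states are $N$-qubit states whose stabilizer group consists of $2^N$ Pauli-group elements. The edge-function is $\mathcal{E}(n)=\max\{|E(S)|: S\subseteq V_G,\ |S|\le n\}$ for $0\le n\le N$ (so $\mathcal{E}(0)=\mathcal{E}(1)=0$). A set $S\subseteq V_G$ with $|S|\le n$ and $|E(S)|=\mathcal{E}(n)$ is called an $n$-optimal vertex set. *)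

theory Defs
  imports "Jordan_Normal_Form.Matrix" "Jordan_Normal_Form.Conjugate"
begin

(* N qubits; computational basis states |c>, c < 2^N, where bit t of c is the value of qubit t. *)

(* The Pauli operator  i^k X^a Z^b  (a, b bit masks < 2^N giving the X- and Z-parts):
   it maps |c> to i^k (-1)^(#{t<N. bit b t and bit c t}) |c xor a>.  Since Y = i X Z,
   these are exactly the elements of the N-qubit Pauli group. *)
definition pauli_op :: "nat \<Rightarrow> nat \<Rightarrow> nat \<Rightarrow> nat \<Rightarrow> complex mat" where
  "pauli_op N k a b = mat (2^N) (2^N) (\<lambda>(row, col).
      if row = Bit_Operations.xor col a
      then \<i> ^ k * (-1) ^ card {t. t < N \<and> bit b t \<and> bit col t}
      else 0)"

definition pauli_group :: "nat \<Rightarrow> complex mat set" where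
  "pauli_group N = {pauli_op N k a b | k a b. k < 4 \<and> a < 2^N \<and> b < 2^N}"

definition Xop :: "nat \<Rightarrow> nat \<Rightarrow> complex mat" where
  "Xop N i = pauli_op N 0 (2^i) 0"

definition Zop :: "nat \<Rightarrow> nat \<Rightarrow> complex mat" where
  "Zop N i = pauli_op N 0 0 (2^i)"

definition stab_group :: "nat \<Rightarrow> complex vec \<Rightarrow> complex mat set" where
  "stab_group N \<phi> = {P \<in> pauli_group N. P *\<^sub>v \<phi> = \<phi>}"

definition stabilizer_state :: "nat \<Rightarrow> complex vec \<Rightarrow> bool" where
  "stabilizer_state N \<phi> \<longleftrightarrow> \<phi> \<in> carrier_vec (2^N) \<and> \<phi> \<bullet>c \<phi> = 1
      \<and> card (stab_group N \<phi>) = 2^N"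

(* A simple graph on vertices {0..<N}: each undirected edge {q_i,q_j} is stored once as (i,j), i<j. *)
definition simple_graph :: "nat \<Rightarrow> (nat \<times> nat) set \<Rightarrow> bool" where
  "simple_graph N E \<longleftrightarrow> (\<forall>(i, j) \<in> E. i < j \<and> j < N)"

definition edges_in :: "(nat \<times> nat) set \<Rightarrow> nat set \<Rightarrow> (nat \<times> nat) set" where
  "edges_in E S = {(i, j) \<in> E. i \<in> S \<and> j \<in> S}"

definition edge_fun :: "nat \<Rightarrow> (nat \<times> nat) set \<Rightarrow> nat \<Rightarrow> nat" where
  "edge_fun N E n = Max {card (edges_in E S) | S. S \<subseteq> {0..<N} \<and> card S \<le> n}"

definition n_optimal :: "nat \<Rightarrow> (nat \<times> nat) set \<Rightarrow> nat \<Rightarrow> nat set \<Rightarrow> bool" where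
  "n_optimal N E n S \<longleftrightarrow> S \<subseteq> {0..<N} \<and> card S \<le> n \<and> card (edges_in E S) = edge_fun N E n"

definition ising_H :: "nat \<Rightarrow> (nat \<times> nat) set \<Rightarrow> real \<Rightarrow> complex mat" where
  "ising_H N E g = mat (2^N) (2^N) (\<lambda>rc.
      - (\<Sum>(i, j) \<in> E. (Zop N i * Zop N j) $$ rc)
      - complex_of_real g * (\<Sum>i<N. Xop N i $$ rc))"

definition expect :: "complex mat \<Rightarrow> complex vec \<Rightarrow> complex" where
  "expect H \<phi> = (H *\<^sub>v \<phi>) \<bullet>c \<phi>"

definition cost_f :: "nat \<Rightarrow> (nat \<times> nat) set \<Rightarrow> real \<Rightarrow> nat set \<Rightarrow> real" where
  "cost_f N E g S = - real (card (edges_in E S)) - g * real (card ({0..<N} - S))"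

end

theory Submission
  imports Defs
begin


definition chi :: "nat \<Rightarrow> nat \<Rightarrow> nat \<Rightarrow> nat" where
  "chi N b c = card {t. t < N \<and> bit b t \<and> bit c t}"
definition sg :: "nat \<Rightarrow> nat \<Rightarrow> nat \<Rightarrow> complex" where
  "sg N b c = (-1) ^ chi N b c"

lemma sg_sym: "sg N b c = sg N c b"
  unfolding sg_def chi_def by (metis (no_types, lifting) Collect_cong)

lemma card_symdiff: assumes "finite A" "finite B"
  shows "card A + card B = card ((A - B) \<union> (B - A)) + 2 * card (A \<inter> B)"
proof -
  have "card A + card B = card (A \<union> B) + card (A \<inter> B)" using card_Un_Int assms by blast
  moreover have "A \<union> B = ((A - B) \<union> (B - A)) \<union> (A \<inter> B)" by blast
  moreover have "card (((A - B) \<union> (B - A)) \<union> (A \<inter> B)) = card ((A - B) \<union> (B - A)) + card (A \<inter> B)"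
    by (rule card_Un_disjoint) (use assms in auto)
  ultimately show ?thesis by simp
qed

lemma sg_xor: "sg N (xor x y) c = sg N x c * sg N y c"
proof -
  define A where "A = {t. t < N \<and> bit x t \<and> bit c t}"
  define B where "B = {t. t < N \<and> bit y t \<and> bit c t}"
  have fA: "finite A" "finite B" unfolding A_def B_def by auto
  have eq: "{t. t < N \<and> bit (xor x y) t \<and> bit c t} = (A - B) \<union> (B - A)"
    unfolding A_def B_def by (auto simp: bit_xor_iff)
  have "card A + card B = chi N (xor x y) c + 2 * card (A \<inter> B)"
    using card_symdiff[OF fA] eq unfolding chi_def by simp
  hence "(-1::complex) ^ (card A + card B) = (-1) ^ chi N (xor x y) c"
    by (metis (no_types, lifting) power_add power_mult neg_one_even_power even_mult_iff even_numeral mult_1_right)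
  thus ?thesis unfolding sg_def chi_def A_def B_def by (simp add: power_add)
qed

lemma sg_0[simp]: "sg N 0 c = 1" unfolding sg_def chi_def by simp

lemma sg_sq: "sg N b c * sg N b c = 1"
  unfolding sg_def by (simp add: power_mult_distrib[symmetric] flip: power_add)

lemma sg_cnj[simp]: "cnj (sg N b c) = sg N b c"
  unfolding sg_def by simp

lemma sg_pow2: "t < N \<Longrightarrow> sg N (2^t) c = (if bit c t then -1 else 1)"
proof -
  assume t: "t < N"
  have "{s. s < N \<and> bit ((2::nat)^t) s \<and> bit c s} = (if bit c t then {t} else {})"
    using t by (auto simp: bit_exp_iff)
  thus ?thesis unfolding sg_def chi_def by simp
qed

lemma xor_lt: "(x::nat) < 2^n \<Longrightarrow> y < 2^n \<Longrightarrow> xor x y < 2^n"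
  by (metis take_bit_nat_eq_self_iff take_bit_xor)

lemma bit_lt: "(x::nat) < 2^n \<Longrightarrow> bit x t \<Longrightarrow> t < n"
  by (metis bit_take_bit_iff take_bit_nat_eq_self_iff)

lemma sum_xor_reindex:
  assumes "a < 2^N"
  shows "(\<Sum>r\<in>{0..<2^N}. f (xor r a)) = (\<Sum>r\<in>{0..<(2::nat)^N}. f r)"
  by (rule sum.reindex_bij_witness[where i="\<lambda>r. xor r a" and j="\<lambda>r. xor r a"])
     (auto simp: xor_lt assms xor.assoc)

lemma sum_sg:
  assumes "d < 2^N"
  shows "(\<Sum>b\<in>{0..<(2::nat)^N}. sg N b d) = (if d = 0 then 2^N else 0)"
proof (cases "d = 0")
  case True
  have "sg N b 0 = 1" for b by (simp add: sg_def chi_def)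
  thus ?thesis using True by simp
next
  case False
  have "\<exists>t. bit d t"
  proof (rule ccontr)
    assume "\<not> (\<exists>t. bit d t)"
    hence "d = 0" by (intro bit_eqI) auto
    thus False using False by simp
  qed
  then obtain t where bt: "bit d t" by blast
  have tN: "t < N" using bit_lt assms bt by blast
  have p: "(2::nat)^t < 2^N" using tN by simp
  have "(\<Sum>b\<in>{0..<(2::nat)^N}. sg N b d) = (\<Sum>b\<in>{0..<(2::nat)^N}. sg N (xor b (2^t)) d)"
    using sum_xor_reindex[OF p, of "\<lambda>b. sg N b d"] by simp
  also have "\<dots> = - (\<Sum>b\<in>{0..<(2::nat)^N}. sg N b d)"
    by (simp add: sg_xor sg_pow2[OF tN] sg_sym[of N "2^t"] bt sum_negf)
  finally show ?thesis using False by simp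
qed



lemma pauli_carrier: "pauli_op N k a b \<in> carrier_mat (2^N) (2^N)"
  unfolding pauli_op_def by simp

lemma pauli_dims[simp]: "dim_row (pauli_op N k a b) = 2^N" "dim_col (pauli_op N k a b) = 2^N"
  unfolding pauli_op_def by simp_all

lemma pauli_entry: "r < 2^N \<Longrightarrow> c < 2^N \<Longrightarrow>
   pauli_op N k a b $$ (r,c) = (if r = xor c a then \<i>^k * sg N b c else 0)"
  unfolding pauli_op_def sg_def chi_def by simp

lemma xor_eq_iff: "((r::nat) = xor c a) = (c = xor r a)"
  by (metis xor.assoc xor_self_eq xor.right_neutral)

lemma pauli_mv:
  assumes "\<phi> \<in> carrier_vec (2^N)" "a < 2^N" "r < 2^N"
  shows "(pauli_op N k a b *\<^sub>v \<phi>) $ r = \<i>^k * sg N b (xor r a) * \<phi> $ (xor r a)"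
proof -
  have "(pauli_op N k a b *\<^sub>v \<phi>) $ r = (\<Sum>c\<in>{0..<2^N}. pauli_op N k a b $$ (r,c) * \<phi> $ c)"
    using assms by (simp add: scalar_prod_def)
  also have "\<dots> = (\<Sum>c\<in>{0..<2^N}. (if c = xor r a then \<i>^k * sg N b c * \<phi> $ c else 0))"
    using assms by (intro sum.cong) (auto simp: pauli_entry xor_eq_iff)
  also have "\<dots> = \<i>^k * sg N b (xor r a) * \<phi> $ (xor r a)"
    using assms xor_lt by (simp add: sum.delta')
  finally show ?thesis .
qed

definition ev :: "nat \<Rightarrow> complex vec \<Rightarrow> nat \<Rightarrow> nat \<Rightarrow> complex" where
  "ev N \<phi> a b = (\<Sum>r\<in>{0..<2^N}. sg N b (xor r a) * \<phi> $ (xor r a) * cnj (\<phi> $ r))"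

lemma expect_sum:
  assumes "\<phi> \<in> carrier_vec n"
  shows "expect M \<phi> = (\<Sum>r\<in>{0..<n}. (M *\<^sub>v \<phi>) $ r * cnj (\<phi> $ r))"
  unfolding expect_def scalar_prod_def using assms by (simp del: index_mult_mat_vec)

lemma expect_pauli:
  assumes "\<phi> \<in> carrier_vec (2^N)" "a < 2^N"
  shows "expect (pauli_op N 0 a b) \<phi> = ev N \<phi> a b"
  unfolding expect_sum[OF assms(1)] ev_def using assms
  by (intro sum.cong refl) (simp add: pauli_mv del: index_mult_mat_vec)

lemma sg_mult2: "sg N b c * sg N b c' = sg N b (xor c c')"
  by (simp add: sg_sym[of N b] sg_xor)

lemma ev_alt:
  assumes "a < 2^N"
  shows "ev N \<phi> a b = (\<Sum>c\<in>{0..<2^N}. sg N b c * (\<phi> $ c * cnj (\<phi> $ (xor c a))))"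
proof -
  have "ev N \<phi> a b = (\<Sum>r\<in>{0..<2^N}. (\<lambda>c. sg N b c * (\<phi> $ c * cnj (\<phi> $ (xor c a)))) (xor r a))"
    unfolding ev_def by (intro sum.cong) (auto simp: xor.assoc)
  also have "\<dots> = (\<Sum>c\<in>{0..<2^N}. sg N b c * (\<phi> $ c * cnj (\<phi> $ (xor c a))))"
    by (rule sum_xor_reindex[OF assms])
  finally show ?thesis .
qed

lemma xor_0_iff[simp]: "(xor (x::nat) y = 0) = (x = y)"
  by (metis xor_eq_iff xor.left_neutral)

lemma swap_inner: "(\<Sum>c\<in>A. \<Sum>b\<in>B. \<Sum>c'\<in>C. h c b c') = (\<Sum>c\<in>A. \<Sum>c'\<in>C. \<Sum>b\<in>B. h c b c')"
  by (rule sum.cong[OF refl]) (rule sum.swap)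

lemma parseval_a:
  assumes "a < 2^N"
  shows "(\<Sum>b\<in>{0..<(2::nat)^N}. ev N \<phi> a b * cnj (ev N \<phi> a b))
       = 2^N * (\<Sum>c\<in>{0..<2^N}. (\<phi> $ c * cnj (\<phi> $ c)) * (\<phi> $ (xor c a) * cnj (\<phi> $ (xor c a))))"
proof -
  define f where "f c = \<phi> $ c * cnj (\<phi> $ (xor c a))" for c
  have e: "ev N \<phi> a b = (\<Sum>c\<in>{0..<2^N}. sg N b c * f c)" for b
    using ev_alt[OF assms] unfolding f_def by simp
  have ce: "cnj (ev N \<phi> a b) = (\<Sum>c\<in>{0..<2^N}. sg N b c * cnj (f c))" for b
    unfolding e by (simp add: cnj_sum)
  have "(\<Sum>b\<in>{0..<(2::nat)^N}. ev N \<phi> a b * cnj (ev N \<phi> a b))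
      = (\<Sum>b\<in>{0..<(2::nat)^N}. \<Sum>c\<in>{0..<2^N}. \<Sum>c'\<in>{0..<2^N}. sg N b (xor c c') * (f c * cnj (f c')))"
  proof (intro sum.cong refl)
    fix b
    have t: "(sg N b c * f c) * (sg N b c' * cnj (f c')) = sg N b (xor c c') * (f c * cnj (f c'))" for c c'
      by (simp add: sg_mult2[symmetric] algebra_simps)
    show "ev N \<phi> a b * cnj (ev N \<phi> a b) = (\<Sum>c\<in>{0..<2^N}. \<Sum>c'\<in>{0..<2^N}. sg N b (xor c c') * (f c * cnj (f c')))"
      unfolding ce unfolding e unfolding sum_product t ..
  qed
  also have "\<dots> = (\<Sum>c\<in>{0..<2^N}. \<Sum>b\<in>{0..<(2::nat)^N}. \<Sum>c'\<in>{0..<2^N}. sg N b (xor c c') * (f c * cnj (f c')))"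
    by (rule sum.swap)
  also have "\<dots> = (\<Sum>c\<in>{0..<2^N}. \<Sum>c'\<in>{0..<2^N}. \<Sum>b\<in>{0..<(2::nat)^N}. sg N b (xor c c') * (f c * cnj (f c')))"
    by (rule swap_inner)
  also have "\<dots> = (\<Sum>c\<in>{0..<2^N}. \<Sum>c'\<in>{0..<2^N}. (\<Sum>b\<in>{0..<(2::nat)^N}. sg N b (xor c c')) * (f c * cnj (f c')))"
    by (simp add: sum_distrib_right)
  also have "\<dots> = (\<Sum>c\<in>{0..<2^N}. \<Sum>c'\<in>{0..<2^N}. (if c' = c then 2^N * (f c * cnj (f c)) else 0))"
    by (intro sum.cong refl) (auto simp: sum_sg xor_lt)
  also have "\<dots> = (\<Sum>c\<in>{0..<2^N}. 2^N * (f c * cnj (f c)))"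
    by (simp add: sum.delta)
  also have "\<dots> = 2^N * (\<Sum>c\<in>{0..<2^N}. (\<phi> $ c * cnj (\<phi> $ c)) * (\<phi> $ (xor c a) * cnj (\<phi> $ (xor c a))))"
    unfolding f_def by (simp add: sum_distrib_left mult_ac)
  finally show ?thesis .
qed

lemma parseval:
  assumes "(\<Sum>r\<in>{0..<(2::nat)^N}. \<phi> $ r * cnj (\<phi> $ r)) = 1"
  shows "(\<Sum>a\<in>{0..<(2::nat)^N}. \<Sum>b\<in>{0..<(2::nat)^N}. ev N \<phi> a b * cnj (ev N \<phi> a b)) = 2^N"
proof -
  define p where "p c = \<phi> $ c * cnj (\<phi> $ c)" for c
  have "(\<Sum>a\<in>{0..<(2::nat)^N}. \<Sum>b\<in>{0..<(2::nat)^N}. ev N \<phi> a b * cnj (ev N \<phi> a b))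
     = (\<Sum>a\<in>{0..<(2::nat)^N}. 2^N * (\<Sum>c\<in>{0..<2^N}. p c * p (xor c a)))"
    unfolding p_def by (intro sum.cong refl) (simp add: parseval_a)
  also have "\<dots> = 2^N * (\<Sum>c\<in>{0..<2^N}. p c * (\<Sum>a\<in>{0..<(2::nat)^N}. p (xor a c)))"
  proof -
    have "(\<Sum>a\<in>{0..<(2::nat)^N}. 2^N * (\<Sum>c\<in>{0..<2^N}. p c * p (xor c a)))
       = 2^N * (\<Sum>a\<in>{0..<(2::nat)^N}. \<Sum>c\<in>{0..<2^N}. p c * p (xor a c))"
      by (simp add: sum_distrib_left xor.commute)
    also have "\<dots> = 2^N * (\<Sum>c\<in>{0..<2^N}. \<Sum>a\<in>{0..<(2::nat)^N}. p c * p (xor a c))"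
      by (subst sum.swap) (rule refl)
    finally show ?thesis by (simp add: sum_distrib_left)
  qed
  also have "\<dots> = 2^N * (\<Sum>c\<in>{0..<2^N}. p c * 1)"
    using sum_xor_reindex[of _ N p] assms unfolding p_def by (intro arg_cong2[where f="(*)"] sum.cong refl) auto
  finally show ?thesis using assms unfolding p_def by simp
qed



definition Dset :: "nat \<Rightarrow> complex vec \<Rightarrow> (nat \<times> nat) set" where
  "Dset N \<phi> = {(a,b). a < 2^N \<and> b < 2^N \<and> (\<exists>k<4. pauli_op N k a b *\<^sub>v \<phi> = \<phi>)}"

lemma norm_sum:
  assumes "\<phi> \<in> carrier_vec n"
  shows "\<phi> \<bullet>c \<phi> = (\<Sum>r\<in>{0..<n}. \<phi> $ r * cnj (\<phi> $ r))"
  unfolding scalar_prod_def using assms by simp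

lemma stab_pointwise:
  assumes "\<phi> \<in> carrier_vec (2^N)" "a < 2^N" "pauli_op N k a b *\<^sub>v \<phi> = \<phi>" "r < 2^N"
  shows "\<i>^k * sg N b (xor r a) * \<phi> $ (xor r a) = \<phi> $ r"
  using pauli_mv[OF assms(1,2,4), of k b] assms(3) by simp

lemma nonzero_entry:
  assumes "(\<Sum>r\<in>{0..<(2::nat)^N}. \<phi> $ r * cnj (\<phi> $ r)) = 1"
  shows "\<exists>r<2^N. \<phi> $ r \<noteq> 0"
proof (rule ccontr)
  assume "\<not> ?thesis"
  hence "(\<Sum>r\<in>{0..<(2::nat)^N}. \<phi> $ r * cnj (\<phi> $ r)) = 0" by (intro sum.neutral) auto
  thus False using assms by simp
qed

lemma stab_ev:
  assumes "\<phi> \<in> carrier_vec (2^N)" "a < 2^N" "pauli_op N k a b *\<^sub>v \<phi> = \<phi>"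
    and nrm: "(\<Sum>r\<in>{0..<(2::nat)^N}. \<phi> $ r * cnj (\<phi> $ r)) = 1"
  shows "ev N \<phi> a b = (-\<i>)^k"
proof -
  have ik: "(-\<i>)^k * \<i>^k = 1" by (simp add: power_mult_distrib[symmetric])
  have "sg N b (xor r a) * \<phi> $ (xor r a) = (-\<i>)^k * \<phi> $ r" if "r < 2^N" for r
  proof -
    have "(-\<i>)^k * \<phi> $ r = (-\<i>)^k * (\<i>^k * sg N b (xor r a) * \<phi> $ (xor r a))"
      using stab_pointwise[OF assms(1-3) that] by simp
    also have "\<dots> = ((-\<i>)^k * \<i>^k) * (sg N b (xor r a) * \<phi> $ (xor r a))" by (simp add: mult_ac)
    finally show ?thesis using ik by simp
  qed
  hence "ev N \<phi> a b = (\<Sum>r\<in>{0..<(2::nat)^N}. (-\<i>)^k * (\<phi> $ r * cnj (\<phi> $ r)))"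
    unfolding ev_def by (intro sum.cong refl) (simp add: mult_ac)
  also have "\<dots> = (-\<i>)^k" using nrm by (simp add: sum_distrib_left[symmetric])
  finally show ?thesis .
qed

lemma stab_ev_abs:
  assumes "\<phi> \<in> carrier_vec (2^N)" "(a,b) \<in> Dset N \<phi>"
    and nrm: "(\<Sum>r\<in>{0..<(2::nat)^N}. \<phi> $ r * cnj (\<phi> $ r)) = 1"
  shows "cmod (ev N \<phi> a b) = 1"
proof -
  obtain k where "pauli_op N k a b *\<^sub>v \<phi> = \<phi>" "a < 2^N" using assms(2) unfolding Dset_def by auto
  from stab_ev[OF assms(1) this(2,1) nrm] show ?thesis by (simp add: norm_power)
qed

lemma Dset_sub: "Dset N \<phi> \<subseteq> {0..<2^N} \<times> {0..<2^N}"
  unfolding Dset_def by auto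

lemma Dset_finite: "finite (Dset N \<phi>)"
  using Dset_sub finite_subset by blast

lemma sum_cart: "(\<Sum>a\<in>A. \<Sum>b\<in>B. F a b) = (\<Sum>p\<in>A \<times> B. F (fst p) (snd p))"
  by (simp add: sum.cartesian_product case_prod_beta)

lemma parseval_real:
  assumes "\<phi> \<in> carrier_vec (2^N)"
    and nrm: "(\<Sum>r\<in>{0..<(2::nat)^N}. \<phi> $ r * cnj (\<phi> $ r)) = 1"
  shows "(\<Sum>p\<in>{0..<(2::nat)^N} \<times> {0..<(2::nat)^N}. (cmod (ev N \<phi> (fst p) (snd p)))^2) = 2^N"
proof -
  let ?X = "(\<Sum>p\<in>{0..<(2::nat)^N} \<times> {0..<(2::nat)^N}. (cmod (ev N \<phi> (fst p) (snd p)))^2)"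
  have "complex_of_real ?X
     = (\<Sum>p\<in>{0..<(2::nat)^N} \<times> {0..<(2::nat)^N}. ev N \<phi> (fst p) (snd p) * cnj (ev N \<phi> (fst p) (snd p)))"
    unfolding of_real_sum by (intro sum.cong refl) (rule complex_norm_square)
  also have "\<dots> = (\<Sum>a\<in>{0..<(2::nat)^N}. \<Sum>b\<in>{0..<(2::nat)^N}. ev N \<phi> a b * cnj (ev N \<phi> a b))"
    by (rule sum_cart[symmetric])
  also have "\<dots> = 2^N" using parseval[OF nrm] .
  finally have "complex_of_real ?X = complex_of_real (2^N)" by simp
  thus ?thesis by (simp only: of_real_eq_iff)
qed

lemma card_Dset_le:
  assumes "\<phi> \<in> carrier_vec (2^N)"
    and nrm: "(\<Sum>r\<in>{0..<(2::nat)^N}. \<phi> $ r * cnj (\<phi> $ r)) = 1"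
  shows "card (Dset N \<phi>) \<le> 2^N"
proof -
  let ?q = "\<lambda>p. (cmod (ev N \<phi> (fst p) (snd p)))^2"
  have "real (card (Dset N \<phi>)) = (\<Sum>p\<in>Dset N \<phi>. ?q p)"
    using stab_ev_abs[OF assms(1) _ nrm] by (simp add: case_prod_beta)
  also have "\<dots> \<le> (\<Sum>p\<in>{0..<(2::nat)^N} \<times> {0..<(2::nat)^N}. ?q p)"
    by (rule sum_mono2) (use Dset_sub in auto)
  also have "\<dots> = 2^N" using parseval_real[OF assms] .
  finally show ?thesis by (metis of_nat_le_iff of_nat_numeral of_nat_power)
qed

lemma ev_zero_outside:
  assumes "\<phi> \<in> carrier_vec (2^N)"
    and nrm: "(\<Sum>r\<in>{0..<(2::nat)^N}. \<phi> $ r * cnj (\<phi> $ r)) = 1"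
    and big: "card (Dset N \<phi>) \<ge> 2^N"
    and ab: "a < 2^N" "b < 2^N" "(a,b) \<notin> Dset N \<phi>"
  shows "ev N \<phi> a b = 0"
proof -
  let ?q = "\<lambda>p. (cmod (ev N \<phi> (fst p) (snd p)))^2"
  let ?R = "{0..<(2::nat)^N} \<times> {0..<(2::nat)^N}"
  have "real (card (Dset N \<phi>)) = (\<Sum>p\<in>Dset N \<phi>. ?q p)"
    using stab_ev_abs[OF assms(1) _ nrm] by (simp add: case_prod_beta)
  moreover have "(\<Sum>p\<in>?R. ?q p) = (\<Sum>p\<in>?R - Dset N \<phi>. ?q p) + (\<Sum>p\<in>Dset N \<phi>. ?q p)"
    using sum.subset_diff[OF Dset_sub] by simp
  moreover have "real (card (Dset N \<phi>)) \<ge> 2^N" using big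
    by (metis of_nat_le_iff of_nat_numeral of_nat_power)
  moreover have "(\<Sum>p\<in>?R. ?q p) = 2^N" using parseval_real[OF assms(1) nrm] .
  ultimately have le: "(\<Sum>p\<in>?R - Dset N \<phi>. ?q p) \<le> 0" by linarith
  have ge: "(\<Sum>p\<in>?R - Dset N \<phi>. ?q p) \<ge> 0" by (rule sum_nonneg) simp
  have fin: "finite (?R - Dset N \<phi>)" by simp
  have "(\<Sum>p\<in>?R - Dset N \<phi>. ?q p) = 0" using le ge by linarith
  hence all: "\<forall>p\<in>?R - Dset N \<phi>. ev N \<phi> (fst p) (snd p) = 0"
    using sum_nonneg_eq_0_iff[OF fin, of ?q] by simp
  have "(a,b) \<in> ?R - Dset N \<phi>" using ab by auto
  from bspec[OF all this] show ?thesis by simp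
qed

lemma pauli_op_phase: assumes h: "\<i>^k = \<i>^k'" shows "pauli_op N k a b = pauli_op N k' a b"
  by (simp only: pauli_op_def h)

lemma stab_finite_card:
  assumes "\<phi> \<in> carrier_vec (2^N)"
    and nrm: "(\<Sum>r\<in>{0..<(2::nat)^N}. \<phi> $ r * cnj (\<phi> $ r)) = 1"
  shows "finite (stab_group N \<phi>) \<and> card (stab_group N \<phi>) \<le> card (Dset N \<phi>)"
proof -
  define kf where "kf a b = (SOME k. k < 4 \<and> pauli_op N k a b *\<^sub>v \<phi> = \<phi>)" for a b
  obtain r0 where r0: "r0 < 2^N" "\<phi> $ r0 \<noteq> 0" using nonzero_entry[OF nrm] by blast
  have sub: "stab_group N \<phi> \<subseteq> (\<lambda>(a,b). pauli_op N (kf a b) a b) ` Dset N \<phi>"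
  proof
    fix P assume "P \<in> stab_group N \<phi>"
    then obtain k a b where P: "P = pauli_op N k a b" "k < 4" "a < 2^N" "b < 2^N" "P *\<^sub>v \<phi> = \<phi>"
      unfolding stab_group_def pauli_group_def by auto
    hence D: "(a,b) \<in> Dset N \<phi>" unfolding Dset_def by auto
    have "\<exists>k. k < 4 \<and> pauli_op N k a b *\<^sub>v \<phi> = \<phi>" using P by auto
    hence kf: "kf a b < 4" "pauli_op N (kf a b) a b *\<^sub>v \<phi> = \<phi>"
      unfolding kf_def by (metis (mono_tags, lifting) someI_ex)+
    have e1: "\<i>^k * sg N b (xor r0 a) * \<phi> $ (xor r0 a) = \<phi> $ r0"
      using stab_pointwise[OF assms(1) P(3) _ r0(1)] P by simp
    have e2: "\<i>^(kf a b) * sg N b (xor r0 a) * \<phi> $ (xor r0 a) = \<phi> $ r0"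
      using stab_pointwise[OF assms(1) P(3) kf(2) r0(1)] by simp
    have "sg N b (xor r0 a) * \<phi> $ (xor r0 a) \<noteq> 0" using e1 r0(2) by auto
    hence "\<i>^k = \<i>^(kf a b)" using e1 e2
      by (metis mult.assoc mult_cancel_right)
    hence "P = pauli_op N (kf a b) a b" using P(1) pauli_op_phase by blast
    thus "P \<in> (\<lambda>(a,b). pauli_op N (kf a b) a b) ` Dset N \<phi>" using D by force
  qed
  have "finite (stab_group N \<phi>)" using sub Dset_finite finite_subset by blast
  moreover have "card (stab_group N \<phi>) \<le> card (Dset N \<phi>)"
  proof -
    have "card (stab_group N \<phi>) \<le> card ((\<lambda>(a,b). pauli_op N (kf a b) a b) ` Dset N \<phi>)"
      by (rule card_mono[OF finite_imageI[OF Dset_finite] sub])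
    also have "\<dots> \<le> card (Dset N \<phi>)" by (rule card_image_le[OF Dset_finite])
    finally show ?thesis .
  qed
  ultimately show ?thesis by blast
qed



lemma stab_facts:
  assumes "stabilizer_state N \<phi>"
  shows "\<phi> \<in> carrier_vec (2^N)" "(\<Sum>r\<in>{0..<(2::nat)^N}. \<phi> $ r * cnj (\<phi> $ r)) = 1"
    "card (Dset N \<phi>) \<ge> 2^N"
proof -
  show c: "\<phi> \<in> carrier_vec (2^N)" using assms unfolding stabilizer_state_def by auto
  show n: "(\<Sum>r\<in>{0..<(2::nat)^N}. \<phi> $ r * cnj (\<phi> $ r)) = 1"
    using assms norm_sum[OF c] unfolding stabilizer_state_def by auto
  show "card (Dset N \<phi>) \<ge> 2^N"
    using stab_finite_card[OF c n] assms unfolding stabilizer_state_def by auto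
qed

lemma ev_real_a:
  assumes "a < 2^N"
  shows "cnj (ev N \<phi> a 0) = ev N \<phi> a 0"
proof -
  have "cnj (ev N \<phi> a 0) = (\<Sum>c\<in>{0..<2^N}. cnj (\<phi> $ c) * \<phi> $ (xor c a))"
    unfolding ev_alt[OF assms] by (simp add: cnj_sum)
  also have "\<dots> = ev N \<phi> a 0" unfolding ev_def by (intro sum.cong refl) (simp add: mult_ac)
  finally show ?thesis .
qed

lemma ev_real_b: "cnj (ev N \<phi> 0 b) = ev N \<phi> 0 b"
  unfolding ev_def by (simp add: cnj_sum mult_ac)

lemma ev_vals:
  assumes "stabilizer_state N \<phi>" "a < 2^N" "b < 2^N" "cnj (ev N \<phi> a b) = ev N \<phi> a b"
  shows "ev N \<phi> a b = complex_of_real (Re (ev N \<phi> a b))" "Re (ev N \<phi> a b) \<le> 1"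
    "ev N \<phi> a b \<noteq> 0 \<Longrightarrow> (a,b) \<in> Dset N \<phi>"
proof -
  note sf = stab_facts[OF assms(1)]
  show e: "ev N \<phi> a b = complex_of_real (Re (ev N \<phi> a b))"
    using assms(4) by (metis Reals_cnj_iff complex_is_Real_iff of_real_Re)
  show D: "ev N \<phi> a b \<noteq> 0 \<Longrightarrow> (a,b) \<in> Dset N \<phi>"
    using ev_zero_outside[OF sf(1,2,3) assms(2,3)] by blast
  show "Re (ev N \<phi> a b) \<le> 1"
  proof (cases "ev N \<phi> a b = 0")
    case True thus ?thesis by simp
  next
    case False
    hence "cmod (ev N \<phi> a b) = 1" using stab_ev_abs[OF sf(1) D sf(2)] by blast
    thus ?thesis using abs_Re_le_cmod[of "ev N \<phi> a b"] by linarith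
  qed
qed

lemma incompat:
  assumes c: "\<phi> \<in> carrier_vec (2^N)"
    and nrm: "(\<Sum>r\<in>{0..<(2::nat)^N}. \<phi> $ r * cnj (\<phi> $ r)) = 1"
    and D1: "(x,0) \<in> Dset N \<phi>" and D2: "(0,m) \<in> Dset N \<phi>"
    and s: "sg N m x = -1"
  shows False
proof -
  obtain k1 where k1: "pauli_op N k1 x 0 *\<^sub>v \<phi> = \<phi>" and x: "x < 2^N" using D1 unfolding Dset_def by auto
  obtain k2 where k2: "pauli_op N k2 0 m *\<^sub>v \<phi> = \<phi>" using D2 unfolding Dset_def by auto
  obtain r0 where r0: "r0 < 2^N" "\<phi> $ r0 \<noteq> 0" using nonzero_entry[OF nrm] by blast
  have h2: "\<i>^k2 * sg N m r * \<phi> $ r = \<phi> $ r" if "r < 2^N" for r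
    using stab_pointwise[OF c _ k2 that] by simp
  define r1 where "r1 = xor r0 x"
  have r1: "r1 < 2^N" unfolding r1_def using xor_lt r0 x by blast
  have "\<i>^k1 * \<phi> $ (xor r1 x) = \<phi> $ r1"
    using stab_pointwise[OF c x k1 r1] by simp
  hence p1: "\<phi> $ r1 = \<i>^k1 * \<phi> $ r0" unfolding r1_def by (simp add: xor.assoc)
  hence nz1: "\<phi> $ r1 \<noteq> 0" using r0 by simp
  have a0: "\<i>^k2 * sg N m r0 = 1" using h2[OF r0(1)] r0(2)
    by (metis mult_cancel_right1)
  have a1: "\<i>^k2 * sg N m r1 = 1" using h2[OF r1] nz1
    by (metis mult_cancel_right1)
  have "sg N m r1 = - sg N m r0" unfolding r1_def
    using s by (simp add: sg_sym[of N m] sg_xor)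
  hence "- (\<i>^k2 * sg N m r0) = 1" using a1 by simp
  hence "\<i>^k2 * sg N m r0 = -1" by (metis minus_minus)
  thus False using a0 by simp
qed

lemma zz:
  assumes "i < N" "j < N" "i \<noteq> j"
  shows "Zop N i * Zop N j = pauli_op N 0 0 (xor (2^i) (2^j))"
proof (rule eq_matI)
  fix r c assume rc: "r < dim_row (pauli_op N 0 0 (xor (2^i) (2^j)))" "c < dim_col (pauli_op N 0 0 (xor (2^i) (2^j)))"
  hence rc': "r < 2^N" "c < 2^N" by simp_all
  have "(Zop N i * Zop N j) $$ (r,c) = (\<Sum>m\<in>{0..<2^N}. Zop N i $$ (r,m) * Zop N j $$ (m,c))"
    using rc' by (simp add: Zop_def scalar_prod_def)
  also have "\<dots> = (\<Sum>m\<in>{0..<2^N}. if m = r then sg N (2^i) r * Zop N j $$ (r,c) else 0)"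
    using rc' by (intro sum.cong refl) (auto simp: Zop_def pauli_entry)
  also have "\<dots> = sg N (2^i) r * Zop N j $$ (r,c)" using rc' by (simp add: sum.delta')
  also have "\<dots> = pauli_op N 0 0 (xor (2^i) (2^j)) $$ (r,c)"
    using rc' by (simp add: Zop_def pauli_entry sg_xor)
  finally show "(Zop N i * Zop N j) $$ (r,c) = pauli_op N 0 0 (xor (2^i) (2^j)) $$ (r,c)" .
qed (simp_all add: Zop_def)

lemma expect_bl:
  assumes "M \<in> carrier_mat (2^N) (2^N)" "\<phi> \<in> carrier_vec (2^N)"
  shows "expect M \<phi> = (\<Sum>r\<in>{0..<(2::nat)^N}. \<Sum>c\<in>{0..<(2::nat)^N}. M $$ (r,c) * (\<phi> $ c * cnj (\<phi> $ r)))"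
  unfolding expect_sum[OF assms(2)] using assms
  by (intro sum.cong refl) (simp add: scalar_prod_def sum_distrib_left sum_distrib_right mult_ac)

lemma lin_sum:
  fixes z :: "'e \<Rightarrow> 'r \<Rightarrow> 'c \<Rightarrow> complex" and x :: "'i \<Rightarrow> 'r \<Rightarrow> 'c \<Rightarrow> complex" and w :: "'r \<Rightarrow> 'c \<Rightarrow> complex" and g :: complex
  assumes "finite E" "finite I"
  shows "(\<Sum>r\<in>R. \<Sum>c\<in>C. (- (\<Sum>e\<in>E. z e r c) - g * (\<Sum>i\<in>I. x i r c)) * w r c)
    = - (\<Sum>e\<in>E. \<Sum>r\<in>R. \<Sum>c\<in>C. z e r c * w r c) - g * (\<Sum>i\<in>I. \<Sum>r\<in>R. \<Sum>c\<in>C. x i r c * w r c)"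
proof -
  have 1: "(\<Sum>r\<in>R. \<Sum>c\<in>C. (\<Sum>e\<in>E. z e r c) * w r c) = (\<Sum>e\<in>E. \<Sum>r\<in>R. \<Sum>c\<in>C. z e r c * w r c)"
  proof -
    have "(\<Sum>r\<in>R. \<Sum>c\<in>C. (\<Sum>e\<in>E. z e r c) * w r c) = (\<Sum>r\<in>R. \<Sum>c\<in>C. \<Sum>e\<in>E. z e r c * w r c)"
      by (simp add: sum_distrib_right)
    also have "\<dots> = (\<Sum>r\<in>R. \<Sum>e\<in>E. \<Sum>c\<in>C. z e r c * w r c)" by (rule swap_inner)
    also have "\<dots> = (\<Sum>e\<in>E. \<Sum>r\<in>R. \<Sum>c\<in>C. z e r c * w r c)" by (rule sum.swap)
    finally show ?thesis .
  qed
  have 2: "(\<Sum>r\<in>R. \<Sum>c\<in>C. (\<Sum>i\<in>I. x i r c) * w r c) = (\<Sum>i\<in>I. \<Sum>r\<in>R. \<Sum>c\<in>C. x i r c * w r c)"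
  proof -
    have "(\<Sum>r\<in>R. \<Sum>c\<in>C. (\<Sum>i\<in>I. x i r c) * w r c) = (\<Sum>r\<in>R. \<Sum>c\<in>C. \<Sum>i\<in>I. x i r c * w r c)"
      by (simp add: sum_distrib_right)
    also have "\<dots> = (\<Sum>r\<in>R. \<Sum>i\<in>I. \<Sum>c\<in>C. x i r c * w r c)" by (rule swap_inner)
    also have "\<dots> = (\<Sum>i\<in>I. \<Sum>r\<in>R. \<Sum>c\<in>C. x i r c * w r c)" by (rule sum.swap)
    finally show ?thesis .
  qed
  have "(\<Sum>r\<in>R. \<Sum>c\<in>C. (- (\<Sum>e\<in>E. z e r c) - g * (\<Sum>i\<in>I. x i r c)) * w r c)
     = - (\<Sum>r\<in>R. \<Sum>c\<in>C. (\<Sum>e\<in>E. z e r c) * w r c) - g * (\<Sum>r\<in>R. \<Sum>c\<in>C. (\<Sum>i\<in>I. x i r c) * w r c)"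
    by (simp add: algebra_simps sum_subtractf sum_negf sum_distrib_left)
  thus ?thesis unfolding 1 2 .
qed

lemma expect_H:
  assumes sg: "simple_graph N E" and c: "\<phi> \<in> carrier_vec (2^N)"
  shows "expect (ising_H N E g) \<phi> =
     - (\<Sum>e\<in>E. ev N \<phi> 0 (xor (2^fst e) (2^snd e))) - complex_of_real g * (\<Sum>i\<in>{0..<N}. ev N \<phi> (2^i) 0)"
proof -
  have finE: "finite E"
  proof -
    have "E \<subseteq> {0..<N} \<times> {0..<N}" using sg unfolding simple_graph_def by auto
    thus ?thesis using finite_subset by blast
  qed
  let ?w = "\<lambda>r c. \<phi> $ c * cnj (\<phi> $ r)"
  let ?z = "\<lambda>e r c. (Zop N (fst e) * Zop N (snd e)) $$ (r,c)"
  let ?x = "\<lambda>i r c. Xop N i $$ (r,c)"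
  have Hc: "ising_H N E g \<in> carrier_mat (2^N) (2^N)" unfolding ising_H_def by simp
  have "expect (ising_H N E g) \<phi> = (\<Sum>r\<in>{0..<(2::nat)^N}. \<Sum>c\<in>{0..<(2::nat)^N}.
      (- (\<Sum>e\<in>E. ?z e r c) - complex_of_real g * (\<Sum>i\<in>{0..<N}. ?x i r c)) * ?w r c)"
    unfolding expect_bl[OF Hc c]
    by (intro sum.cong refl) (simp add: ising_H_def case_prod_beta atLeast0LessThan)
  also have "\<dots> = - (\<Sum>e\<in>E. \<Sum>r\<in>{0..<(2::nat)^N}. \<Sum>c\<in>{0..<(2::nat)^N}. ?z e r c * ?w r c)
      - complex_of_real g * (\<Sum>i\<in>{0..<N}. \<Sum>r\<in>{0..<(2::nat)^N}. \<Sum>c\<in>{0..<(2::nat)^N}. ?x i r c * ?w r c)"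
    by (rule lin_sum[where z="?z" and x="?x" and w="?w"]) (simp_all add: finE)
  also have "(\<Sum>e\<in>E. \<Sum>r\<in>{0..<(2::nat)^N}. \<Sum>c\<in>{0..<(2::nat)^N}. ?z e r c * ?w r c)
      = (\<Sum>e\<in>E. ev N \<phi> 0 (xor (2^fst e) (2^snd e)))"
  proof (intro sum.cong refl)
    fix e assume "e \<in> E"
    hence e: "fst e < N" "snd e < N" "fst e \<noteq> snd e" using sg unfolding simple_graph_def by auto
    have "(\<Sum>r\<in>{0..<(2::nat)^N}. \<Sum>c\<in>{0..<(2::nat)^N}. ?z e r c * ?w r c)
        = expect (pauli_op N 0 0 (xor (2^fst e) (2^snd e))) \<phi>"
      unfolding expect_bl[OF pauli_carrier c] zz[OF e] ..
    also have "\<dots> = ev N \<phi> 0 (xor (2^fst e) (2^snd e))" by (rule expect_pauli[OF c]) simp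
    finally show "(\<Sum>r\<in>{0..<(2::nat)^N}. \<Sum>c\<in>{0..<(2::nat)^N}. ?z e r c * ?w r c) = ev N \<phi> 0 (xor (2^fst e) (2^snd e))" .
  qed
  also have "(\<Sum>i\<in>{0..<N}. \<Sum>r\<in>{0..<(2::nat)^N}. \<Sum>c\<in>{0..<(2::nat)^N}. ?x i r c * ?w r c)
      = (\<Sum>i\<in>{0..<N}. ev N \<phi> (2^i) 0)"
  proof (intro sum.cong refl)
    fix i assume "i \<in> {0..<N}"
    hence i: "(2::nat)^i < 2^N" by simp
    have "(\<Sum>r\<in>{0..<(2::nat)^N}. \<Sum>c\<in>{0..<(2::nat)^N}. ?x i r c * ?w r c) = expect (Xop N i) \<phi>"
      unfolding Xop_def expect_bl[OF pauli_carrier c] ..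
    also have "\<dots> = ev N \<phi> (2^i) 0" unfolding Xop_def by (rule expect_pauli[OF c i])
    finally show "(\<Sum>r\<in>{0..<(2::nat)^N}. \<Sum>c\<in>{0..<(2::nat)^N}. ?x i r c * ?w r c) = ev N \<phi> (2^i) 0" .
  qed
  finally show ?thesis .
qed



lemma finite_E: "simple_graph N E \<Longrightarrow> finite E"
proof -
  assume sg: "simple_graph N E"
  have "E \<subseteq> {0..<N} \<times> {0..<N}" using sg unfolding simple_graph_def by auto
  thus ?thesis using finite_subset by blast
qed

lemma sum_le_card:
  fixes f :: "'a \<Rightarrow> real"
  assumes "finite A" "B \<subseteq> A" "\<And>x. x \<in> A \<Longrightarrow> x \<notin> B \<Longrightarrow> f x = 0" "\<And>x. x \<in> B \<Longrightarrow> f x \<le> 1"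
  shows "(\<Sum>x\<in>A. f x) \<le> real (card B)"
proof -
  have fB: "finite B" using assms finite_subset by blast
  have "(\<Sum>x\<in>A. f x) = (\<Sum>x\<in>B. f x)"
    using assms by (intro sum.mono_neutral_right) auto
  also have "\<dots> \<le> (\<Sum>x\<in>B. 1)" using assms(4) by (intro sum_mono) auto
  finally show ?thesis by simp
qed

lemma lower_bound:
  assumes sgr: "simple_graph N E" and g: "g \<ge> 0" and st: "stabilizer_state N \<phi>"
  shows "\<exists>x T. expect (ising_H N E g) \<phi> = complex_of_real x \<and> T \<subseteq> {0..<N} \<and> cost_f N E g T \<le> x"
proof -
  note sf = stab_facts[OF st]
  define eZ where "eZ e = ev N \<phi> 0 (xor (2^fst e) (2^snd e))" for e :: "nat \<times> nat"
  define eX where "eX i = ev N \<phi> (2^i) 0" for i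
  have Eb: "fst e < N \<and> snd e < N \<and> fst e \<noteq> snd e" if "e \<in> E" for e
    using sgr that unfolding simple_graph_def by auto
  have pZ: "(2::nat)^fst e < 2^N" "xor ((2::nat)^fst e) (2^snd e) < 2^N" if "e \<in> E" for e
    using Eb[OF that] xor_lt by auto
  have vZ: "eZ e = complex_of_real (Re (eZ e)) \<and> Re (eZ e) \<le> 1 \<and> (eZ e \<noteq> 0 \<longrightarrow> (0, xor (2^fst e) (2^snd e)) \<in> Dset N \<phi>)"
    if "e \<in> E" for e
    using ev_vals[OF st _ pZ(2)[OF that] ev_real_b] unfolding eZ_def by auto
  have vX: "eX i = complex_of_real (Re (eX i)) \<and> Re (eX i) \<le> 1 \<and> (eX i \<noteq> 0 \<longrightarrow> (2^i, 0) \<in> Dset N \<phi>)"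
    if "i < N" for i
  proof -
    have p: "(2::nat)^i < 2^N" using that by simp
    show ?thesis using ev_vals[OF st p _ ev_real_a[OF p]] unfolding eX_def by auto
  qed
  define A where "A = {i\<in>{0..<N}. eX i \<noteq> 0}"
  define T where "T = {0..<N} - A"
  define x where "x = - (\<Sum>e\<in>E. Re (eZ e)) - g * (\<Sum>i\<in>{0..<N}. Re (eX i))"
  have ex: "expect (ising_H N E g) \<phi> = complex_of_real x"
  proof -
    have "expect (ising_H N E g) \<phi> = - (\<Sum>e\<in>E. eZ e) - complex_of_real g * (\<Sum>i\<in>{0..<N}. eX i)"
      unfolding expect_H[OF sgr sf(1)] eZ_def eX_def ..
    also have "(\<Sum>e\<in>E. eZ e) = (\<Sum>e\<in>E. complex_of_real (Re (eZ e)))"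
      using vZ by (intro sum.cong refl) auto
    also have "(\<Sum>i\<in>{0..<N}. eX i) = (\<Sum>i\<in>{0..<N}. complex_of_real (Re (eX i)))"
      using vX by (intro sum.cong refl) auto
    finally show ?thesis unfolding x_def by simp
  qed
  have edge_in: "e \<in> edges_in E T" if e: "e \<in> E" "eZ e \<noteq> 0" for e
  proof -
    obtain i j where ij: "e = (i,j)" by (cases e)
    have b: "i < N" "j < N" "i \<noteq> j" using Eb[OF e(1)] ij by auto
    define m where "m = xor ((2::nat)^i) (2^j)"
    have Dm: "(0, m) \<in> Dset N \<phi>" using vZ[OF e(1)] e(2) ij unfolding m_def by auto
    have bm: "bit m i" "bit m j" unfolding m_def using b by (auto simp: bit_xor_iff bit_exp_iff)
    have notA: "k \<notin> A" if k: "k < N" "bit m k" for k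
    proof
      assume "k \<in> A"
      hence "(2^k, 0) \<in> Dset N \<phi>" using vX[OF k(1)] unfolding A_def by auto
      moreover have "sg N m (2^k) = -1" using sg_sym[of N m] sg_pow2[OF k(1)] k(2) by simp
      ultimately show False using incompat[OF sf(1,2) _ Dm] by blast
    qed
    have "i \<in> T" "j \<in> T" using notA[OF b(1) bm(1)] notA[OF b(2) bm(2)] b unfolding T_def by auto
    thus ?thesis using e(1) ij unfolding edges_in_def by auto
  qed
  have s1: "(\<Sum>e\<in>E. Re (eZ e)) \<le> real (card (edges_in E T))"
  proof (rule sum_le_card[OF finite_E[OF sgr]])
    show "edges_in E T \<subseteq> E" unfolding edges_in_def by auto
    show "Re (eZ e) = 0" if "e \<in> E" "e \<notin> edges_in E T" for e
      using edge_in that by fastforce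
    show "Re (eZ e) \<le> 1" if "e \<in> edges_in E T" for e
      using vZ that unfolding edges_in_def by auto
  qed
  have s2: "(\<Sum>i\<in>{0..<N}. Re (eX i)) \<le> real (card A)"
  proof (rule sum_le_card)
    show "A \<subseteq> {0..<N}" unfolding A_def by auto
    show "Re (eX i) = 0" if "i \<in> {0..<N}" "i \<notin> A" for i
      using that unfolding A_def by auto
    show "Re (eX i) \<le> 1" if "i \<in> A" for i
      using vX that unfolding A_def by auto
  qed simp
  have cA: "card ({0..<N} - T) = card A"
  proof -
    have "{0..<N} - T = A" unfolding T_def A_def by auto
    thus ?thesis by simp
  qed
  have "cost_f N E g T \<le> x"
    unfolding cost_f_def x_def cA using s1 s2 g mult_left_mono[OF s2 g] by linarith
  moreover have "T \<subseteq> {0..<N}" unfolding T_def by auto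
  ultimately show ?thesis using ex by blast
qed

lemma EF_finite: "finite {card (edges_in E S) | S. S \<subseteq> {0..<N} \<and> card S \<le> n}"
proof -
  have "{card (edges_in E S) | S. S \<subseteq> {0..<N} \<and> card S \<le> n} \<subseteq> (\<lambda>S. card (edges_in E S)) ` Pow {0..<N}"
    by auto
  thus ?thesis using finite_subset by blast
qed

lemma edge_fun_ge: "S \<subseteq> {0..<N} \<Longrightarrow> card S \<le> n \<Longrightarrow> card (edges_in E S) \<le> edge_fun N E n"
  unfolding edge_fun_def by (rule Max_ge[OF EF_finite]) blast

lemma edge_fun_in: "\<exists>S. S \<subseteq> {0..<N} \<and> card S \<le> n \<and> card (edges_in E S) = edge_fun N E n"
proof -
  have "edge_fun N E n \<in> {card (edges_in E S) | S. S \<subseteq> {0..<N} \<and> card S \<le> n}"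
    unfolding edge_fun_def by (rule Max_in[OF EF_finite]) auto
  thus ?thesis by auto
qed

lemma valset: "{- real (edge_fun N E n) - g * real (N - n) | n. n \<le> N}
   = (\<lambda>n. - real (edge_fun N E n) - g * real (N - n)) ` {..N}"
  by (auto simp del: of_nat_diff)

lemma m_le_cost:
  assumes g: "g \<ge> 0" and T: "T \<subseteq> {0..<N}"
  shows "Min {- real (edge_fun N E n) - g * real (N - n) | n. n \<le> N} \<le> cost_f N E g T"
proof -
  have cT: "card T \<le> N" using card_mono[OF _ T] by simp
  have "Min {- real (edge_fun N E n) - g * real (N - n) | n. n \<le> N}
      \<le> - real (edge_fun N E (card T)) - g * real (N - card T)"
    unfolding valset by (rule Min_le) (use cT in auto)
  also have "\<dots> \<le> cost_f N E g T"
  proof -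
    have "card (edges_in E T) \<le> edge_fun N E (card T)" using edge_fun_ge[OF T] by simp
    moreover have "card ({0..<N} - T) = N - card T" using card_Diff_subset[OF _ T] finite_subset[OF T] by simp
    ultimately show ?thesis unfolding cost_f_def by simp
  qed
  finally show ?thesis .
qed

lemma exists_opt:
  assumes g: "g \<ge> 0"
  shows "\<exists>T. T \<subseteq> {0..<N} \<and> cost_f N E g T \<le> Min {- real (edge_fun N E n) - g * real (N - n) | n. n \<le> N}"
proof -
  have "Min {- real (edge_fun N E n) - g * real (N - n) | n. n \<le> N}
     \<in> (\<lambda>n. - real (edge_fun N E n) - g * real (N - n)) ` {..N}"
    unfolding valset by (rule Min_in) auto
  then obtain n0 where n0: "n0 \<le> N" "Min {- real (edge_fun N E n) - g * real (N - n) | n. n \<le> N}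
     = - real (edge_fun N E n0) - g * real (N - n0)" by auto
  obtain S where S: "S \<subseteq> {0..<N}" "card S \<le> n0" "card (edges_in E S) = edge_fun N E n0"
    using edge_fun_in by blast
  have cd: "card ({0..<N} - S) = N - card S" using card_Diff_subset[OF _ S(1)] finite_subset[OF S(1)] by simp
  have "real (N - n0) \<le> real (N - card S)" using S(2) n0(1) by simp
  hence "g * real (N - n0) \<le> g * real (N - card S)" using g by (rule mult_left_mono)
  hence "cost_f N E g S \<le> - real (edge_fun N E n0) - g * real (N - n0)"
    unfolding cost_f_def cd S(3) by linarith
  thus ?thesis using S(1) n0(2) by auto
qed

lemma part2:
  assumes g: "g \<ge> 0" and V: "V \<subseteq> {0..<N}" and min: "\<forall>S. S \<subseteq> {0..<N} \<longrightarrow> cost_f N E g V \<le> cost_f N E g S"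
  shows "n_optimal N E (card V) V"
proof -
  obtain S where S: "S \<subseteq> {0..<N}" "card S \<le> card V" "card (edges_in E S) = edge_fun N E (card V)"
    using edge_fun_in by blast
  have le: "card (edges_in E V) \<le> edge_fun N E (card V)" using edge_fun_ge[OF V] by simp
  have cV: "card ({0..<N} - V) = N - card V" using card_Diff_subset[OF _ V] finite_subset[OF V] by simp
  have cS: "card ({0..<N} - S) = N - card S" using card_Diff_subset[OF _ S(1)] finite_subset[OF S(1)] by simp
  have cVN: "card V \<le> N" using card_mono[OF _ V] by simp
  have "real (N - card V) \<le> real (N - card S)" using S(2) cVN by simp
  hence gm: "g * real (N - card V) \<le> g * real (N - card S)" using g by (rule mult_left_mono)
  have "cost_f N E g V \<le> cost_f N E g S" using min S(1) by blast
  hence "real (card (edges_in E S)) \<le> real (card (edges_in E V))"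
    unfolding cost_f_def cV cS using gm by linarith
  hence "card (edges_in E V) = edge_fun N E (card V)" using le S(3) by linarith
  thus ?thesis unfolding n_optimal_def using V by simp
qed



definition msk :: "nat set \<Rightarrow> nat" where "msk A = (\<Sum>t\<in>A. 2^t)"

lemma bit_msk: "finite A \<Longrightarrow> bit (msk A) t \<longleftrightarrow> t \<in> A"
proof (induction A arbitrary: t rule: finite_induct)
  case empty thus ?case by (simp add: msk_def)
next
  case (insert x F)
  have m: "msk (insert x F) = 2^x + msk F" unfolding msk_def using insert by simp
  have "Bit_Operations.and ((2::nat)^x) (msk F) = 0"
    by (rule bit_eqI) (use insert in \<open>auto simp: bit_and_iff bit_exp_iff\<close>)
  hence "msk (insert x F) = Bit_Operations.or (2^x) (msk F)" unfolding m by (rule disjunctive_add_eq_or)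
  thus ?case using insert by (auto simp: bit_or_iff bit_exp_iff)
qed

lemma sub_msk: "finite A \<Longrightarrow> {c::nat. \<forall>t. bit c t \<longrightarrow> t \<in> A} = msk ` Pow A"
proof
  assume fA: "finite A"
  show "msk ` Pow A \<subseteq> {c. \<forall>t. bit c t \<longrightarrow> t \<in> A}"
    using fA by (auto simp: bit_msk finite_subset)
  show "{c. \<forall>t. bit c t \<longrightarrow> t \<in> A} \<subseteq> msk ` Pow A"
  proof
    fix c assume c: "c \<in> {c::nat. \<forall>t. bit c t \<longrightarrow> t \<in> A}"
    have sub: "{t. bit c t} \<subseteq> A" using c by auto
    hence f: "finite {t. bit c t}" using fA finite_subset by blast
    have "c = msk {t. bit c t}" by (rule bit_eqI) (simp add: bit_msk[OF f])
    thus "c \<in> msk ` Pow A" using sub by auto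
  qed
qed

lemma card_sub: "finite A \<Longrightarrow> card {c::nat. \<forall>t. bit c t \<longrightarrow> t \<in> A} = 2 ^ card A"
proof -
  assume fA: "finite A"
  have "inj_on msk (Pow A)"
  proof (rule inj_onI)
    fix X Y assume "X \<in> Pow A" "Y \<in> Pow A" "msk X = msk Y"
    hence fX: "finite X" and fY: "finite Y" and eq: "msk X = msk Y" using fA finite_subset by auto
    have "t \<in> X \<longleftrightarrow> t \<in> Y" for t using bit_msk[OF fX, of t] bit_msk[OF fY, of t] eq by simp
    thus "X = Y" by blast
  qed
  hence "card (msk ` Pow A) = card (Pow A)" by (rule card_image)
  thus ?thesis unfolding sub_msk[OF fA] using card_Pow[OF fA] by simp
qed

lemma lt_if_bits: "(\<forall>t. bit (c::nat) t \<longrightarrow> t < N) \<Longrightarrow> c < 2^N"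
proof -
  assume h: "\<forall>t. bit c t \<longrightarrow> t < N"
  have "take_bit N c = c" by (rule bit_eqI) (use h in \<open>auto simp: bit_take_bit_iff\<close>)
  thus ?thesis by (metis take_bit_nat_less_exp)
qed

lemma pauli_inj:
  assumes "a < 2^N" "b < 2^N" "a' < 2^N" "b' < 2^N" "pauli_op N 0 a b = pauli_op N 0 a' b'"
  shows "a = a' \<and> b = b'"
proof -
  have "pauli_op N 0 a b $$ (a, 0) = 1" using assms(1) by (simp add: pauli_entry sg_sym[of N b])
  hence "pauli_op N 0 a' b' $$ (a, 0) \<noteq> 0" using assms(5) by simp
  hence aa: "a = a'" using assms(1) by (simp add: pauli_entry split: if_splits)
  have "bit b t = bit b' t" for t
  proof (cases "t < N")
    case True
    have p: "(2::nat)^t < 2^N" using True by simp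
    have "pauli_op N 0 a b $$ (xor (2^t) a, 2^t) = pauli_op N 0 a' b' $$ (xor (2^t) a, 2^t)"
      using assms(5) by simp
    hence "sg N b (2^t) = sg N b' (2^t)" using p assms xor_lt aa by (simp add: pauli_entry)
    thus ?thesis using sg_pow2[OF True] sg_sym[of N b] sg_sym[of N b'] by (auto split: if_splits)
  next
    case False thus ?thesis using bit_lt assms(2,4) by blast
  qed
  hence "b = b'" by (intro bit_eqI) auto
  thus ?thesis using aa by simp
qed

lemma existence:
  assumes sgr: "simple_graph N E" and T: "T \<subseteq> {0..<N}"
  shows "\<exists>\<phi>. stabilizer_state N \<phi> \<and> expect (ising_H N E g) \<phi> = complex_of_real (cost_f N E g T)"
proof -
  define U where "U = {0..<N} - T"
  have fU: "finite U" "finite T" unfolding U_def using T finite_subset by auto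
  have UT: "card U + card T = N" unfolding U_def using card_Diff_subset[OF fU(2) T] card_mono[OF _ T] by simp
  define \<alpha> where "\<alpha> = 1 / sqrt (2 ^ card U)"
  define Fa where "Fa = {c::nat. \<forall>t. bit c t \<longrightarrow> t \<in> U}"
  define Fb where "Fb = {c::nat. \<forall>t. bit c t \<longrightarrow> t \<in> T}"
  have cFa: "card Fa = 2 ^ card U" unfolding Fa_def using card_sub[OF fU(1)] .
  have cFb: "card Fb = 2 ^ card T" unfolding Fb_def using card_sub[OF fU(2)] .
  have Fa_lt: "c < 2^N" if "c \<in> Fa" for c
  proof -
    have "\<forall>t. bit c t \<longrightarrow> t < N" using that unfolding Fa_def U_def by auto
    thus ?thesis by (rule lt_if_bits)
  qed
  have Fb_lt: "c < 2^N" if "c \<in> Fb" for c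
  proof -
    have "\<forall>t. bit c t \<longrightarrow> t < N" using that T unfolding Fb_def by auto
    thus ?thesis by (rule lt_if_bits)
  qed
  have condFa: "(\<forall>t\<in>T. \<not> bit c t) \<longleftrightarrow> c \<in> Fa" if "c < 2^N" for c
    using bit_lt[OF that] unfolding Fa_def U_def by auto
  define \<phi> where "\<phi> = vec (2^N) (\<lambda>c. if (\<forall>t\<in>T. \<not> bit c t) then complex_of_real \<alpha> else 0)"
  have c: "\<phi> \<in> carrier_vec (2^N)" unfolding \<phi>_def by simp
  have \<phi>r: "\<phi> $ r = (if r \<in> Fa then complex_of_real \<alpha> else 0)" if "r < 2^N" for r
    unfolding \<phi>_def using that condFa by simp
  have nrm: "(\<Sum>r\<in>{0..<(2::nat)^N}. \<phi> $ r * cnj (\<phi> $ r)) = 1"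
  proof -
    have "(\<Sum>r\<in>{0..<(2::nat)^N}. \<phi> $ r * cnj (\<phi> $ r))
        = (\<Sum>r\<in>{0..<(2::nat)^N}. if r \<in> Fa then complex_of_real (\<alpha>^2) else 0)"
      by (intro sum.cong refl) (simp add: \<phi>r power2_eq_square)
    also have "\<dots> = complex_of_real (\<alpha>^2) * card ({0..<(2::nat)^N} \<inter> Fa)"
      by (simp add: sum.If_cases)
    also have "{0..<(2::nat)^N} \<inter> Fa = Fa" using Fa_lt by auto
    also have "complex_of_real (\<alpha>^2) * card Fa = 1"
      unfolding cFa \<alpha>_def by (simp add: power_divide)
    finally show ?thesis .
  qed
  have stab: "pauli_op N 0 a b *\<^sub>v \<phi> = \<phi>" if ab: "a \<in> Fa" "b \<in> Fb" for a b
  proof (rule eq_vecI)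
    show "dim_vec (pauli_op N 0 a b *\<^sub>v \<phi>) = dim_vec \<phi>" using c by simp
    fix r assume "r < dim_vec \<phi>"
    hence r: "r < 2^N" using c by simp
    have a: "a < 2^N" using Fa_lt ab by blast
    have ra: "xor r a < 2^N" using xor_lt r a by blast
    have same: "xor r a \<in> Fa \<longleftrightarrow> r \<in> Fa"
    proof -
      have "(\<forall>t\<in>T. \<not> bit (xor r a) t) \<longleftrightarrow> (\<forall>t\<in>T. \<not> bit r t)"
        using ab(1) unfolding Fa_def U_def by (auto simp: bit_xor_iff)
      thus ?thesis using condFa[OF r] condFa[OF ra] by simp
    qed
    have sg1: "sg N b (xor r a) = 1" if "xor r a \<in> Fa"
    proof -
      have e: "{t. t < N \<and> bit b t \<and> bit (xor r a) t} = {}"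
        using that ab(2) unfolding Fa_def Fb_def U_def by auto
      show ?thesis unfolding sg_def chi_def e by simp
    qed
    have pm: "(pauli_op N 0 a b *\<^sub>v \<phi>) $ r = sg N b (xor r a) * \<phi> $ (xor r a)"
      using pauli_mv[OF c a r, of 0 b] by simp
    show "(pauli_op N 0 a b *\<^sub>v \<phi>) $ r = \<phi> $ r"
    proof (cases "r \<in> Fa")
      case True
      hence "xor r a \<in> Fa" using same by simp
      thus ?thesis unfolding pm using sg1 \<phi>r[OF r] \<phi>r[OF ra] True by simp
    next
      case False
      hence "xor r a \<notin> Fa" using same by simp
      thus ?thesis unfolding pm using \<phi>r[OF r] \<phi>r[OF ra] False by simp
    qed
  qed
  let ?F = "Fa \<times> Fb"
  have FD: "?F \<subseteq> Dset N \<phi>"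
  proof (safe)
    fix a b assume ab: "a \<in> Fa" "b \<in> Fb"
    have "pauli_op N 0 a b *\<^sub>v \<phi> = \<phi>" by (rule stab[OF ab])
    moreover have "a < 2^N" "b < 2^N" using Fa_lt Fb_lt ab by auto
    ultimately show "(a,b) \<in> Dset N \<phi>" unfolding Dset_def by (auto intro!: exI[of _ 0])
  qed
  have cF: "card ?F = 2^N"
  proof -
    have "card ?F = 2^card U * 2^card T" by (simp add: card_cartesian_product cFa cFb)
    also have "\<dots> = 2^N" using UT by (simp flip: power_add)
    finally show ?thesis .
  qed
  have finF: "finite ?F" by (rule finite_subset[OF FD Dset_finite])
  have cD: "card (Dset N \<phi>) \<ge> 2^N" using card_mono[OF Dset_finite FD] cF by simp
  have "card (Dset N \<phi>) = 2^N" using cD card_Dset_le[OF c nrm] by simp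
  hence DF: "Dset N \<phi> = ?F"
    using card_subset_eq[OF Dset_finite FD] cF by simp
  have st: "stabilizer_state N \<phi>"
  proof -
    have img: "(\<lambda>(a,b). pauli_op N 0 a b) ` ?F \<subseteq> stab_group N \<phi>"
    proof (safe)
      fix a b assume ab: "a \<in> Fa" "b \<in> Fb"
      have lt: "a < 2^N" "b < 2^N" "(0::nat) < 4" using Fa_lt Fb_lt ab by auto
      have "pauli_op N 0 a b \<in> pauli_group N" unfolding pauli_group_def using lt by blast
      thus "pauli_op N 0 a b \<in> stab_group N \<phi>" unfolding stab_group_def using stab[OF ab] by blast
    qed
    have inj: "inj_on (\<lambda>(a,b). pauli_op N 0 a b) ?F"
    proof (rule inj_onI)
      fix p q assume pq: "p \<in> ?F" "q \<in> ?F" "(\<lambda>(a,b). pauli_op N 0 a b) p = (\<lambda>(a,b). pauli_op N 0 a b) q"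
      obtain a b a' b' where p: "p = (a,b)" and q: "q = (a',b')" by (cases p, cases q)
      have lt: "a < 2^N" "b < 2^N" "a' < 2^N" "b' < 2^N" using pq p q Fa_lt Fb_lt by auto
      have "pauli_op N 0 a b = pauli_op N 0 a' b'" using pq(3) p q by simp
      from pauli_inj[OF lt this] show "p = q" using p q by simp
    qed
    have sfc: "finite (stab_group N \<phi>) \<and> card (stab_group N \<phi>) \<le> card (Dset N \<phi>)"
      by (rule stab_finite_card[OF c nrm])
    have "card ((\<lambda>(a,b). pauli_op N 0 a b) ` ?F) \<le> card (stab_group N \<phi>)"
      using card_mono[OF conjunct1[OF sfc] img] .
    hence "2^N \<le> card (stab_group N \<phi>)" using card_image[OF inj] cF by simp
    moreover have "card (stab_group N \<phi>) \<le> 2^N" using sfc card_Dset_le[OF c nrm] by linarith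
    ultimately have "card (stab_group N \<phi>) = 2^N" by simp
    moreover have "\<phi> \<bullet>c \<phi> = 1" using norm_sum[OF c] nrm by simp
    ultimately show ?thesis unfolding stabilizer_state_def using c by simp
  qed
  have evF: "ev N \<phi> a b = (if (a,b) \<in> ?F then 1 else 0)" if "a < 2^N" "b < 2^N" for a b
  proof (cases "(a,b) \<in> ?F")
    case True
    hence "pauli_op N 0 a b *\<^sub>v \<phi> = \<phi>" using stab by auto
    from stab_ev[OF c that(1) this nrm] True show ?thesis by simp
  next
    case False
    thus ?thesis using ev_zero_outside[OF c nrm cD that] DF by simp
  qed
  have zeroF: "0 \<in> Fa" "0 \<in> Fb" unfolding Fa_def Fb_def by auto
  have eX: "ev N \<phi> (2^i) 0 = (if i \<in> U then 1 else 0)" if "i \<in> {0..<N}" for i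
  proof -
    have "(2::nat)^i < 2^N" using that by simp
    moreover have "(2::nat)^i \<in> Fa \<longleftrightarrow> i \<in> U" unfolding Fa_def by (auto simp: bit_exp_iff)
    ultimately show ?thesis using evF zeroF by simp
  qed
  have eZ: "ev N \<phi> 0 (xor (2^fst e) (2^snd e)) = (if e \<in> edges_in E T then 1 else 0)" if "e \<in> E" for e
  proof -
    have b: "fst e < N" "snd e < N" "fst e \<noteq> snd e" using sgr that unfolding simple_graph_def by auto
    have "xor ((2::nat)^fst e) (2^snd e) < 2^N" using b xor_lt by simp
    moreover have "xor ((2::nat)^fst e) (2^snd e) \<in> Fb \<longleftrightarrow> e \<in> edges_in E T"
      using b that unfolding Fb_def edges_in_def by (auto simp: bit_xor_iff bit_exp_iff case_prod_beta)
    ultimately show ?thesis using evF zeroF by simp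
  qed
  have "expect (ising_H N E g) \<phi>
      = - (\<Sum>e\<in>E. (if e \<in> edges_in E T then 1 else 0)) - complex_of_real g * (\<Sum>i\<in>{0..<N}. (if i \<in> U then 1 else 0))"
    unfolding expect_H[OF sgr c] using eX eZ by simp
  also have "(\<Sum>e\<in>E. (if e \<in> edges_in E T then 1 else 0)) = (of_nat (card (edges_in E T)) :: complex)"
  proof -
    have "edges_in E T \<subseteq> E" unfolding edges_in_def by auto
    hence "E \<inter> edges_in E T = edges_in E T" by auto
    thus ?thesis by (simp add: sum.If_cases finite_E[OF sgr])
  qed
  also have "(\<Sum>i\<in>{0..<N}. (if i \<in> U then 1 else 0)) = (of_nat (card U) :: complex)"
  proof -
    have "{0..<N} \<inter> U = U" unfolding U_def by auto
    thus ?thesis by (simp add: sum.If_cases)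
  qed
  also have "- (of_nat (card (edges_in E T)) :: complex) - complex_of_real g * of_nat (card U)
     = complex_of_real (cost_f N E g T)"
    unfolding cost_f_def U_def by simp
  finally show ?thesis using st by blast
qed


theorem mainTheorem6:
  fixes N :: nat and E :: "(nat \<times> nat) set" and g :: real
  assumes "simple_graph N E" and "g \<ge> 0"
  shows "(let m = Min {- real (edge_fun N E n) - g * real (N - n) | n. n \<le> N} in
            (\<exists>\<phi>. stabilizer_state N \<phi> \<and> expect (ising_H N E g) \<phi> = complex_of_real m)
          \<and> (\<forall>\<phi>. stabilizer_state N \<phi> \<longrightarrow>
                (\<exists>x. expect (ising_H N E g) \<phi> = complex_of_real x \<and> m \<le> x)))
    \<and> (\<forall>V. V \<subseteq> {0..<N} \<and> (\<forall>S. S \<subseteq> {0..<N} \<longrightarrow> cost_f N E g V \<le> cost_f N E g S)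
            \<longrightarrow> n_optimal N E (card V) V)"
proof -
  define m where "m = Min {- real (edge_fun N E n) - g * real (N - n) | n. n \<le> N}"
  have ex: "\<exists>\<phi>. stabilizer_state N \<phi> \<and> expect (ising_H N E g) \<phi> = complex_of_real m"
  proof -
    obtain T where T: "T \<subseteq> {0..<N}" "cost_f N E g T \<le> m"
      using exists_opt[OF assms(2), of N E] unfolding m_def by blast
    have "m \<le> cost_f N E g T" unfolding m_def by (rule m_le_cost[OF assms(2) T(1)])
    hence "cost_f N E g T = m" using T(2) by simp
    thus ?thesis using existence[OF assms(1) T(1), of g] by simp
  qed
  have lb: "\<forall>\<phi>. stabilizer_state N \<phi> \<longrightarrow> (\<exists>x. expect (ising_H N E g) \<phi> = complex_of_real x \<and> m \<le> x)"
  proof (intro allI impI)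
    fix \<phi> assume st: "stabilizer_state N \<phi>"
    obtain x T where xT: "expect (ising_H N E g) \<phi> = complex_of_real x" "T \<subseteq> {0..<N}" "cost_f N E g T \<le> x"
      using lower_bound[OF assms st] by blast
    have "m \<le> cost_f N E g T" unfolding m_def by (rule m_le_cost[OF assms(2) xT(2)])
    thus "\<exists>x. expect (ising_H N E g) \<phi> = complex_of_real x \<and> m \<le> x" using xT by force
  qed
  have p2: "\<forall>V. V \<subseteq> {0..<N} \<and> (\<forall>S. S \<subseteq> {0..<N} \<longrightarrow> cost_f N E g V \<le> cost_f N E g S)
            \<longrightarrow> n_optimal N E (card V) V"
    using part2[OF assms(2)] by blast
  show ?thesis unfolding Let_def m_def[symmetric] using ex lb p2 by blast
qed

end
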